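(* Let $\mathbb{F}$ be a field with $\operatorname{char}\mathbb{F}\neq 2$, let $\xi,\eta\in\mathbb{F}\setminus\{0,1\}$ with $\xi\neq\eta$, and let $M$ be an axial decomposition algebra of Majorana type $(\xi,\eta)$. Then $M$ is dihedral if and only if $M$ is generated (as an algebra) by two axes and there exists an automorphism of $M$ which interchanges these two generating axes.
   Context: $M$ is a commutative nonassociative algebra over $\mathbb{F}$. Let $\Phi:\{0,1,2,3\}\to\mathbb{F}$ with $\Phi(0)=0$, $\Phi(1)=1$, $\Phi(2)=\xi$, $\Phi(3)=\eta$. An element $a\in M$ is an axis (with parameters $\Phi$) if it comes with a decomposition $M=\bigoplus_{i=0}^3 M^i(a)$ (part of the data of the axis) such that: (1) $xa=\Phi(i)x$ for all $x\in M^i(a)$; (2) $M^1(a)=\mathbb{F}a$; (3) $M^0(a)M^i(a)\subset M^i(a)$ for all $i$, $M^2(a)M^2(a)\subset M^0(a)\oplus M^1(a)$, $M^2(a)M^3(a)\subset M^3(a)$ and $M^3(a)M^3(a)\subset M^0(a)\oplus M^1(a)\oplus M^2(a)$. $M$ is an axial decomposition algebra of Majorana type $(\xi,\eta)$ if it has such an axis. For an axis $a$, its Miyamoto involution $\tau(a)$ is the automorphism of $M$ acting as the identity on $M^0(a)\oplus M^1(a)\oplus M^2(a)$ and as $-1$ on $M^3(a)$. $M$ is called dihedral if it is equipped with a sequence of axes $(a_i)_{i\in\mathbb{Z}}$ such that (D1) $M$ is generated as an algebra by the $a_i$; (D2) $a_i\mapsto a_{i+1}$ (for all $i$) extends to an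 automorphism of $M$; (D3) for every $j\in\mathbb{Z}$, the Miyamoto involution $\tau(a_j)$ maps $a_i$ to $a_{2j-i}$ for all $i$. *)

theory Defs
  imports Complex_Main
begin

definition comm_nonassoc_algebra ::
  "('f::field \<Rightarrow> 'm::ab_group_add \<Rightarrow> 'm) \<Rightarrow> ('m \<Rightarrow> 'm \<Rightarrow> 'm) \<Rightarrow> bool" where
  "comm_nonassoc_algebra smult mult \<longleftrightarrow>
     vector_space smult \<and>
     (\<forall>x y z. mult (x + y) z = mult x z + mult y z) \<and>
     (\<forall>c x y. mult (smult c x) y = smult c (mult x y)) \<and>
     (\<forall>x y. mult x y = mult y x)"

definition Phi :: "'f::field \<Rightarrow> 'f \<Rightarrow> nat \<Rightarrow> 'f" where
  "Phi xi eta i = (if i = 0 then 0 else if i = 1 then 1 else if i = 2 then xi else eta)"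

definition setsum :: "'m::ab_group_add set \<Rightarrow> 'm set \<Rightarrow> 'm set" where
  "setsum A B = {x + y | x y. x \<in> A \<and> y \<in> B}"

definition is_axis ::
  "('f::field \<Rightarrow> 'm::ab_group_add \<Rightarrow> 'm) \<Rightarrow> ('m \<Rightarrow> 'm \<Rightarrow> 'm) \<Rightarrow> 'f \<Rightarrow> 'f
     \<Rightarrow> 'm \<Rightarrow> (nat \<Rightarrow> 'm set) \<Rightarrow> bool" where
  "is_axis smult mult xi eta a V \<longleftrightarrow>
     \<comment> \<open>direct sum decomposition M = V0 + V1 + V2 + V3 into subspaces\<close>
     (\<forall>i<4. module.subspace smult (V i)) \<and>
     (\<forall>x. \<exists>v0 v1 v2 v3. v0 \<in> V 0 \<and> v1 \<in> V 1 \<and> v2 \<in> V 2 \<and> v3 \<in> V 3 \<and>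
            x = v0 + v1 + v2 + v3) \<and>
     (\<forall>v0 v1 v2 v3. v0 \<in> V 0 \<longrightarrow> v1 \<in> V 1 \<longrightarrow> v2 \<in> V 2 \<longrightarrow> v3 \<in> V 3 \<longrightarrow>
            v0 + v1 + v2 + v3 = 0 \<longrightarrow> v0 = 0 \<and> v1 = 0 \<and> v2 = 0 \<and> v3 = 0) \<and>
     \<comment> \<open>(1) eigenvalues\<close>
     (\<forall>i<4. \<forall>x \<in> V i. mult x a = smult (Phi xi eta i) x) \<and>
     \<comment> \<open>(2) M^1(a) = F a\<close>
     V 1 = range (\<lambda>c. smult c a) \<and>
     \<comment> \<open>(3) fusion rules\<close>
     (\<forall>i<4. \<forall>x \<in> V 0. \<forall>y \<in> V i. mult x y \<in> V i) \<and>
     (\<forall>x \<in> V 2. \<forall>y \<in> V 2. mult x y \<in> setsum (V 0) (V 1)) \<and>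
     (\<forall>x \<in> V 2. \<forall>y \<in> V 3. mult x y \<in> V 3) \<and>
     (\<forall>x \<in> V 3. \<forall>y \<in> V 3. mult x y \<in> setsum (setsum (V 0) (V 1)) (V 2))"

definition miyamoto :: "(nat \<Rightarrow> 'm::ab_group_add set) \<Rightarrow> 'm \<Rightarrow> 'm" where
  "miyamoto V x = (THE y. \<exists>v0 v1 v2 v3. v0 \<in> V 0 \<and> v1 \<in> V 1 \<and> v2 \<in> V 2 \<and> v3 \<in> V 3 \<and>
                     x = v0 + v1 + v2 + v3 \<and> y = v0 + v1 + v2 - v3)"

definition is_automorphism ::
  "('f::field \<Rightarrow> 'm::ab_group_add \<Rightarrow> 'm) \<Rightarrow> ('m \<Rightarrow> 'm \<Rightarrow> 'm) \<Rightarrow> ('m \<Rightarrow> 'm) \<Rightarrow> bool" where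
  "is_automorphism smult mult \<phi> \<longleftrightarrow>
     bij \<phi> \<and>
     (\<forall>x y. \<phi> (x + y) = \<phi> x + \<phi> y) \<and>
     (\<forall>c x. \<phi> (smult c x) = smult c (\<phi> x)) \<and>
     (\<forall>x y. \<phi> (mult x y) = mult (\<phi> x) (\<phi> y))"

definition is_subalgebra ::
  "('f::field \<Rightarrow> 'm::ab_group_add \<Rightarrow> 'm) \<Rightarrow> ('m \<Rightarrow> 'm \<Rightarrow> 'm) \<Rightarrow> 'm set \<Rightarrow> bool" where
  "is_subalgebra smult mult S \<longleftrightarrow>
     module.subspace smult S \<and> (\<forall>x \<in> S. \<forall>y \<in> S. mult x y \<in> S)"

definition generates ::
  "('f::field \<Rightarrow> 'm::ab_group_add \<Rightarrow> 'm) \<Rightarrow> ('m \<Rightarrow> 'm \<Rightarrow> 'm) \<Rightarrow> 'm set \<Rightarrow> bool" where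
  "generates smult mult A \<longleftrightarrow>
     (\<forall>S. is_subalgebra smult mult S \<and> A \<subseteq> S \<longrightarrow> S = UNIV)"

definition is_axial_decomposition_algebra ::
  "('f::field \<Rightarrow> 'm::ab_group_add \<Rightarrow> 'm) \<Rightarrow> ('m \<Rightarrow> 'm \<Rightarrow> 'm) \<Rightarrow> 'f \<Rightarrow> 'f \<Rightarrow> bool" where
  "is_axial_decomposition_algebra smult mult xi eta \<longleftrightarrow>
     (\<exists>a V. is_axis smult mult xi eta a V)"

definition is_dihedral ::
  "('f::field \<Rightarrow> 'm::ab_group_add \<Rightarrow> 'm) \<Rightarrow> ('m \<Rightarrow> 'm \<Rightarrow> 'm) \<Rightarrow> 'f \<Rightarrow> 'f \<Rightarrow> bool" where
  "is_dihedral smult mult xi eta \<longleftrightarrow>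
     (\<exists>(a :: int \<Rightarrow> 'm) (V :: int \<Rightarrow> nat \<Rightarrow> 'm set).
        (\<forall>i. is_axis smult mult xi eta (a i) (V i)) \<and>
        generates smult mult (range a) \<and>
        (\<exists>\<phi>. is_automorphism smult mult \<phi> \<and> (\<forall>i. \<phi> (a i) = a (i + 1))) \<and>
        (\<forall>j i. miyamoto (V j) (a i) = a (2 * j - i)))"

end

theory Submission
  imports Defs
begin

locale axalg =
  fixes smult :: "'f::field \<Rightarrow> 'm::ab_group_add \<Rightarrow> 'm"
    and mult :: "'m \<Rightarrow> 'm \<Rightarrow> 'm"
    and xi eta :: 'f
  assumes alg: "comm_nonassoc_algebra smult mult"
    and xi0: "xi \<noteq> 0" and xi1: "xi \<noteq> 1" and eta0: "eta \<noteq> 0" and eta1: "eta \<noteq> 1"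
    and xieta: "xi \<noteq> eta"
begin

sublocale module smult
  using alg unfolding comm_nonassoc_algebra_def vector_space_def module_def by auto

lemma mult_add_left: "mult (x + y) z = mult x z + mult y z"
  using alg unfolding comm_nonassoc_algebra_def by auto
lemma mult_comm: "mult x y = mult y x"
  using alg unfolding comm_nonassoc_algebra_def by auto
lemma mult_scale_left: "mult (smult c x) y = smult c (mult x y)"
  using alg unfolding comm_nonassoc_algebra_def by auto
lemma mult_add_right: "mult z (x + y) = mult z x + mult z y"
  by (metis mult_comm mult_add_left)
lemma mult_scale_right: "mult y (smult c x) = smult c (mult y x)"
  by (metis mult_comm mult_scale_left)
lemma mult_zero_left [simp]: "mult 0 y = 0"
  by (metis add_cancel_right_right mult_add_left add_0)
lemma mult_zero_right [simp]: "mult y 0 = 0"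
  by (metis mult_comm mult_zero_left)
lemma mult_minus_left: "mult (- x) y = - mult x y"
  by (metis add.right_inverse add_eq_0_iff mult_add_left mult_zero_left)
lemma mult_minus_right: "mult y (- x) = - mult y x"
  by (metis mult_comm mult_minus_left)
lemma mult_diff_left: "mult (x - z) y = mult x y - mult z y"
  unfolding diff_conv_add_uminus by (simp only: mult_add_left mult_minus_left)
lemma mult_diff_right: "mult y (x - z) = mult y x - mult y z"
  unfolding diff_conv_add_uminus by (simp only: mult_add_right mult_minus_right)

lemmas mult_simps = mult_add_left mult_add_right mult_scale_left mult_scale_right
  mult_diff_left mult_diff_right mult_minus_left mult_minus_right

context
  fixes a V assumes ax: "is_axis smult mult xi eta a V"
begin

lemma ax_parts:
  "\<forall>i<4. subspace (V i)"
  "\<forall>x. \<exists>v0 v1 v2 v3. v0 \<in> V 0 \<and> v1 \<in> V 1 \<and> v2 \<in> V 2 \<and> v3 \<in> V 3 \<and>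
            x = v0 + v1 + v2 + v3"
  "\<forall>v0 v1 v2 v3. v0 \<in> V 0 \<longrightarrow> v1 \<in> V 1 \<longrightarrow> v2 \<in> V 2 \<longrightarrow> v3 \<in> V 3 \<longrightarrow>
            v0 + v1 + v2 + v3 = 0 \<longrightarrow> v0 = 0 \<and> v1 = 0 \<and> v2 = 0 \<and> v3 = 0"
  "\<forall>i<4. \<forall>x \<in> V i. mult x a = smult (Phi xi eta i) x"
  "V 1 = range (\<lambda>c. smult c a)"
  "\<forall>i<4. \<forall>x \<in> V 0. \<forall>y \<in> V i. mult x y \<in> V i"
  "\<forall>x \<in> V 2. \<forall>y \<in> V 2. mult x y \<in> setsum (V 0) (V 1)"
  "\<forall>x \<in> V 2. \<forall>y \<in> V 3. mult x y \<in> V 3"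
  "\<forall>x \<in> V 3. \<forall>y \<in> V 3. mult x y \<in> setsum (setsum (V 0) (V 1)) (V 2)"
  using ax unfolding is_axis_def apply - apply ((elim conjE), assumption)+ done

lemma sub_all: "i < 4 \<Longrightarrow> subspace (V i)"
  using ax_parts(1) by blast

lemma sub: "subspace (V 0)" "subspace (V 1)" "subspace (V 2)" "subspace (V 3)"
  by (rule sub_all; simp)+

lemma sub1s [simp]: "subspace (V (Suc 0))" using sub by simp
lemma sub_simps [simp]: "subspace (V 0)" "subspace (V 2)" "subspace (V 3)" using sub by auto

lemma decomp: "\<exists>v0 v1 v2 v3. v0 \<in> V 0 \<and> v1 \<in> V 1 \<and> v2 \<in> V 2 \<and> v3 \<in> V 3 \<and>
            x = v0 + v1 + v2 + v3"
  using ax_parts(2) by blast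

lemma direct: "v0 \<in> V 0 \<Longrightarrow> v1 \<in> V 1 \<Longrightarrow> v2 \<in> V 2 \<Longrightarrow> v3 \<in> V 3 \<Longrightarrow>
            v0 + v1 + v2 + v3 = 0 \<Longrightarrow> v0 = 0 \<and> v1 = 0 \<and> v2 = 0 \<and> v3 = 0"
  using ax_parts(3) by blast

lemma uniq:
  assumes "v0 \<in> V 0" "v1 \<in> V 1" "v2 \<in> V 2" "v3 \<in> V 3"
    "w0 \<in> V 0" "w1 \<in> V 1" "w2 \<in> V 2" "w3 \<in> V 3"
    "v0 + v1 + v2 + v3 = w0 + w1 + w2 + w3"
  shows "v0 = w0 \<and> v1 = w1 \<and> v2 = w2 \<and> v3 = w3"
proof -
  have "(v0 - w0) + (v1 - w1) + (v2 - w2) + (v3 - w3) = (v0 + v1 + v2 + v3) - (w0 + w1 + w2 + w3)"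
    by (simp add: algebra_simps)
  then have d: "(v0 - w0) + (v1 - w1) + (v2 - w2) + (v3 - w3) = 0"
    using assms(9) by simp
  have m: "v0 - w0 \<in> V 0" "v1 - w1 \<in> V 1" "v2 - w2 \<in> V 2" "v3 - w3 \<in> V 3"
    using assms(1-8) sub subspace_diff by blast+
  from direct[OF m d] show ?thesis by simp
qed

lemma miy_eq:
  assumes "v0 \<in> V 0" "v1 \<in> V 1" "v2 \<in> V 2" "v3 \<in> V 3"
  shows "miyamoto V (v0 + v1 + v2 + v3) = v0 + v1 + v2 - v3"
  unfolding miyamoto_def
proof (rule the_equality)
  show "\<exists>w0 w1 w2 w3. w0 \<in> V 0 \<and> w1 \<in> V 1 \<and> w2 \<in> V 2 \<and> w3 \<in> V 3 \<and>
          v0 + v1 + v2 + v3 = w0 + w1 + w2 + w3 \<and> v0 + v1 + v2 - v3 = w0 + w1 + w2 - w3"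
    using assms by blast
next
  fix y assume "\<exists>w0 w1 w2 w3. w0 \<in> V 0 \<and> w1 \<in> V 1 \<and> w2 \<in> V 2 \<and> w3 \<in> V 3 \<and>
          v0 + v1 + v2 + v3 = w0 + w1 + w2 + w3 \<and> y = w0 + w1 + w2 - w3"
  then obtain w0 w1 w2 w3 where w: "w0 \<in> V 0" "w1 \<in> V 1" "w2 \<in> V 2" "w3 \<in> V 3"
    "v0 + v1 + v2 + v3 = w0 + w1 + w2 + w3" "y = w0 + w1 + w2 - w3" by blast
  then show "y = v0 + v1 + v2 - v3" using uniq[OF assms w(1-5)] by simp
qed

lemma eig: "i < 4 \<Longrightarrow> x \<in> V i \<Longrightarrow> mult x a = smult (Phi xi eta i) x"
  using ax_parts(4) by blast

lemma eig0: "x \<in> V 0 \<Longrightarrow> mult x a = 0"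
  using eig[of 0 x] by (simp add: Phi_def)
lemma eig1: "x \<in> V 1 \<Longrightarrow> mult x a = x"
  using eig[of 1 x] by (simp add: Phi_def)
lemma eig2: "x \<in> V 2 \<Longrightarrow> mult x a = smult xi x"
  using eig[of 2 x] by (simp add: Phi_def)
lemma eig3: "x \<in> V 3 \<Longrightarrow> mult x a = smult eta x"
  using eig[of 3 x] by (simp add: Phi_def)

lemma V1: "V 1 = range (\<lambda>c. smult c a)"
  by (rule ax_parts(5))

lemma fus0: "i < 4 \<Longrightarrow> x \<in> V 0 \<Longrightarrow> y \<in> V i \<Longrightarrow> mult x y \<in> V i"
  using ax_parts(6) by blast
lemma fus22: "x \<in> V 2 \<Longrightarrow> y \<in> V 2 \<Longrightarrow> mult x y \<in> setsum (V 0) (V 1)"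
  using ax_parts(7) by blast
lemma fus23: "x \<in> V 2 \<Longrightarrow> y \<in> V 3 \<Longrightarrow> mult x y \<in> V 3"
  using ax_parts(8) by blast
lemma fus33: "x \<in> V 3 \<Longrightarrow> y \<in> V 3 \<Longrightarrow> mult x y \<in> setsum (setsum (V 0) (V 1)) (V 2)"
  using ax_parts(9) by blast

lemma fus1: "i < 4 \<Longrightarrow> x \<in> V 1 \<Longrightarrow> y \<in> V i \<Longrightarrow> mult x y \<in> V i"
proof -
  assume i: "i < 4" and x: "x \<in> V 1" and y: "y \<in> V i"
  then obtain c where c: "x = smult c a" using V1 by auto
  have "mult x y = smult c (mult a y)" by (simp add: c mult_scale_left)
  also have "mult a y = mult y a" by (rule mult_comm)
  finally have "mult x y = smult c (smult (Phi xi eta i) y)"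
    using eig[OF i y] by simp
  moreover have si: "subspace (V i)" using i by (rule sub_all)
  ultimately show ?thesis using subspace_scale[OF si subspace_scale[OF si y]] by simp
qed

definition inE :: "'m \<Rightarrow> bool" where
  "inE z \<longleftrightarrow> (\<exists>u0 u1 u2. u0 \<in> V 0 \<and> u1 \<in> V 1 \<and> u2 \<in> V 2 \<and> z = u0 + u1 + u2)"

lemma inE_add: "inE x \<Longrightarrow> inE y \<Longrightarrow> inE (x + y)"
proof -
  assume "inE x" "inE y"
  then obtain u0 u1 u2 w0 w1 w2 where "u0 \<in> V 0" "u1 \<in> V 1" "u2 \<in> V 2" "x = u0 + u1 + u2"
    "w0 \<in> V 0" "w1 \<in> V 1" "w2 \<in> V 2" "y = w0 + w1 + w2" unfolding inE_def by blast
  moreover have "u0 + w0 \<in> V 0" "u1 + w1 \<in> V 1" "u2 + w2 \<in> V 2"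
    using calculation sub subspace_add by blast+
  moreover have "x + y = (u0 + w0) + (u1 + w1) + (u2 + w2)"
    using calculation by (simp add: ac_simps)
  ultimately show ?thesis unfolding inE_def by blast
qed

lemma inE0: "x \<in> V 0 \<Longrightarrow> inE x"
  unfolding inE_def by (rule exI[of _ x], rule exI[of _ 0], rule exI[of _ 0]) (simp add: subspace_0)
lemma inE1: "x \<in> V 1 \<Longrightarrow> inE x"
  unfolding inE_def by (rule exI[of _ 0], rule exI[of _ x], rule exI[of _ 0]) (simp add: subspace_0)
lemma inE2: "x \<in> V 2 \<Longrightarrow> inE x"
  unfolding inE_def by (rule exI[of _ 0], rule exI[of _ 0], rule exI[of _ x]) (simp add: subspace_0)
lemma inE01: "x \<in> setsum (V 0) (V 1) \<Longrightarrow> inE x"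
proof -
  assume "x \<in> setsum (V 0) (V 1)"
  then obtain p q where "p \<in> V 0" "q \<in> V 1" "x = p + q" unfolding setsum_def by blast
  then show ?thesis unfolding inE_def
    by (rule_tac exI[of _ p], rule_tac exI[of _ q], rule_tac exI[of _ 0]) (simp add: subspace_0)
qed
lemma inE012: "x \<in> setsum (setsum (V 0) (V 1)) (V 2) \<Longrightarrow> inE x"
proof -
  assume "x \<in> setsum (setsum (V 0) (V 1)) (V 2)"
  then obtain r s where "r \<in> setsum (V 0) (V 1)" "s \<in> V 2" "x = r + s" unfolding setsum_def by blast
  moreover then obtain p q where "p \<in> V 0" "q \<in> V 1" "r = p + q" unfolding setsum_def by blast
  ultimately show ?thesis unfolding inE_def by blast
qed


lemma miy_E:
  assumes "inE e" "w \<in> V 3"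
  shows "miyamoto V (e + w) = e - w"
proof -
  obtain u0 u1 u2 where u: "u0 \<in> V 0" "u1 \<in> V 1" "u2 \<in> V 2" "e = u0 + u1 + u2"
    using assms(1) unfolding inE_def by blast
  show ?thesis using miy_eq[OF u(1-3) assms(2)] u(4) by simp
qed

lemma decompE: "\<exists>e w. inE e \<and> w \<in> V 3 \<and> x = e + w"
proof -
  obtain v0 v1 v2 v3 where v: "v0 \<in> V 0" "v1 \<in> V 1" "v2 \<in> V 2" "v3 \<in> V 3"
    "x = v0 + v1 + v2 + v3" using decomp by blast
  then have "inE (v0 + v1 + v2)" unfolding inE_def by blast
  then show ?thesis using v by blast
qed

lemma inE_scale: "inE e \<Longrightarrow> inE (smult c e)"
proof -
  assume "inE e"
  then obtain u0 u1 u2 where u: "u0 \<in> V 0" "u1 \<in> V 1" "u2 \<in> V 2" "e = u0 + u1 + u2"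
    unfolding inE_def by blast
  have "smult c e = smult c u0 + smult c u1 + smult c u2" using u(4) by (simp add: scale_right_distrib)
  moreover have "smult c u0 \<in> V 0" "smult c u1 \<in> V 1" "smult c u2 \<in> V 2"
    using u(1-3) sub subspace_scale by blast+
  ultimately show ?thesis unfolding inE_def by blast
qed

lemma inE_neg: "inE e \<Longrightarrow> inE (- e)"
  using inE_scale[of e "-1"] by simp

lemma EE: assumes "inE e" "inE e'" shows "inE (mult e e')"
proof -
  obtain u0 u1 u2 where u: "u0 \<in> V 0" "u1 \<in> V 1" "u2 \<in> V 2" "e = u0 + u1 + u2"
    using assms(1) unfolding inE_def by blast
  obtain w0 w1 w2 where w: "w0 \<in> V 0" "w1 \<in> V 1" "w2 \<in> V 2" "e' = w0 + w1 + w2"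
    using assms(2) unfolding inE_def by blast
  have eq: "mult e e' = ((mult u0 w0 + mult u0 w1 + mult u0 w2) + (mult u1 w0 + mult u1 w1 + mult u1 w2))
      + (mult u2 w0 + mult u2 w1 + mult u2 w2)"
    unfolding u(4) w(4) by (simp add: mult_add_left mult_add_right ac_simps)
  have "inE (mult u0 w0)" using fus0[of 0 u0 w0] u w inE0 by simp
  moreover have "inE (mult u0 w1)" using fus0[of 1 u0 w1] u w inE1 by simp
  moreover have "inE (mult u0 w2)" using fus0[of 2 u0 w2] u w inE2 by simp
  moreover have "inE (mult u1 w0)" using fus1[of 0 u1 w0] u w inE0 by simp
  moreover have "inE (mult u1 w1)" using fus1[of 1 u1 w1] u w inE1 by simp
  moreover have "inE (mult u1 w2)" using fus1[of 2 u1 w2] u w inE2 by simp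
  moreover have "inE (mult u2 w0)" using fus0[of 2 w0 u2] u w inE2 mult_comm[of u2 w0] by simp
  moreover have "inE (mult u2 w1)" using fus1[of 2 w1 u2] u w inE2 mult_comm[of u2 w1] by simp
  moreover have "inE (mult u2 w2)" using fus22[of u2 w2] u w inE01 by simp
  ultimately show ?thesis unfolding eq by (simp add: inE_add)
qed

lemma E3: assumes "inE e" "w \<in> V 3" shows "mult e w \<in> V 3"
proof -
  obtain u0 u1 u2 where u: "u0 \<in> V 0" "u1 \<in> V 1" "u2 \<in> V 2" "e = u0 + u1 + u2"
    using assms(1) unfolding inE_def by blast
  have eq: "mult e w = mult u0 w + mult u1 w + mult u2 w"
    unfolding u(4) by (simp only: mult_add_left)
  have "mult u0 w \<in> V 3" using fus0[of 3 u0 w] u assms by simp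
  moreover have "mult u1 w \<in> V 3" using fus1[of 3 u1 w] u assms by simp
  moreover have "mult u2 w \<in> V 3" using fus23[of u2 w] u assms by simp
  ultimately show ?thesis unfolding eq using sub(4) subspace_add by blast
qed

lemma miy_inv: "miyamoto V (miyamoto V x) = x"
proof -
  obtain e w where ew: "inE e" "w \<in> V 3" "x = e + w" using decompE by blast
  have "- w \<in> V 3" using ew(2) sub(4) subspace_neg by blast
  then have "miyamoto V (e + - w) = e - - w" using miy_E ew(1) by blast
  then show ?thesis using miy_E[OF ew(1,2)] ew(3) by simp
qed

lemma miy_aut: "is_automorphism smult mult (miyamoto V)"
  unfolding is_automorphism_def
proof (intro conjI allI)
  show "bij (miyamoto V)" by (rule o_bij[of "miyamoto V"]) (auto simp: miy_inv)
next
  fix x y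
  obtain e w where ew: "inE e" "w \<in> V 3" "x = e + w" using decompE by blast
  obtain e' w' where ew': "inE e'" "w' \<in> V 3" "y = e' + w'" using decompE by blast
  have "x + y = (e + e') + (w + w')" using ew ew' by (simp add: ac_simps)
  moreover have "inE (e + e')" using ew ew' inE_add by blast
  moreover have "w + w' \<in> V 3" using ew ew' sub(4) subspace_add by blast
  ultimately have m3: "miyamoto V (x + y) = (e + e') - (w + w')" using miy_E by simp
  have m1: "miyamoto V x = e - w" using miy_E[OF ew(1,2)] ew(3) by simp
  have m2: "miyamoto V y = e' - w'" using miy_E[OF ew'(1,2)] ew'(3) by simp
  show "miyamoto V (x + y) = miyamoto V x + miyamoto V y"
    unfolding m1 m2 m3 by (simp add: algebra_simps)
  have p1: "inE (mult e e' + mult w w')"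
    using EE[OF ew(1) ew'(1)] inE012[OF fus33[OF ew(2) ew'(2)]] inE_add by blast
  have p2: "mult e w' + mult w e' \<in> V 3"
    using E3[OF ew(1) ew'(2)] E3[OF ew'(1) ew(2)] mult_comm[of w e'] sub(4) subspace_add by simp
  have "mult x y = (mult e e' + mult w w') + (mult e w' + mult w e')"
    unfolding ew(3) ew'(3) by (simp add: mult_add_left mult_add_right ac_simps)
  then have m4: "miyamoto V (mult x y) = (mult e e' + mult w w') - (mult e w' + mult w e')"
    using miy_E[OF p1 p2] by simp
  show "miyamoto V (mult x y) = mult (miyamoto V x) (miyamoto V y)"
    unfolding m1 m2 m4 by (simp add: mult_diff_left mult_diff_right algebra_simps)
next
  fix c x
  obtain e w where ew: "inE e" "w \<in> V 3" "x = e + w" using decompE by blast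
  have "smult c x = smult c e + smult c w" using ew(3) by (simp add: scale_right_distrib)
  moreover have "inE (smult c e)" using ew inE_scale by blast
  moreover have "smult c w \<in> V 3" using ew sub(4) subspace_scale by blast
  ultimately have "miyamoto V (smult c x) = smult c e - smult c w" using miy_E by simp
  then show "miyamoto V (smult c x) = smult c (miyamoto V x)"
    using miy_E[OF ew(1,2)] ew(3) by (simp add: scale_right_diff_distrib)
qed

definition Lop :: "'f \<Rightarrow> 'm \<Rightarrow> 'm" where
  "Lop l z = mult z a - smult l z"

lemma Lstep:
  assumes "x0 \<in> V 0" "x1 \<in> V 1" "x2 \<in> V 2" "x3 \<in> V 3"
  shows "Lop l (smult c0 x0 + smult c1 x1 + smult c2 x2 + smult c3 x3) =
    smult ((0 - l) * c0) x0 + smult ((1 - l) * c1) x1 + smult ((xi - l) * c2) x2 + smult ((eta - l) * c3) x3"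
proof -
  have e: "mult x0 a = 0" "mult x1 a = x1" "mult x2 a = smult xi x2" "mult x3 a = smult eta x3"
    using eig0[OF assms(1)] eig1[OF assms(2)] eig2[OF assms(3)] eig3[OF assms(4)] by auto
  show ?thesis unfolding Lop_def
    by (simp add: mult_add_left mult_scale_left e scale_left_diff_distrib scale_right_distrib
        scale_right_diff_distrib algebra_simps)
qed

lemma miy_closed:
  assumes S: "is_subalgebra smult mult S" and aS: "a \<in> S" and xS: "x \<in> S"
  shows "miyamoto V x \<in> S"
proof -
  have sS: "subspace S" and mS: "\<And>u v. u \<in> S \<Longrightarrow> v \<in> S \<Longrightarrow> mult u v \<in> S"
    using S unfolding is_subalgebra_def by auto
  have LS: "z \<in> S \<Longrightarrow> Lop l z \<in> S" for z l
    unfolding Lop_def using mS[OF _ aS] subspace_scale[OF sS] subspace_diff[OF sS] by blast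
  obtain v0 v1 v2 v3 where v: "v0 \<in> V 0" "v1 \<in> V 1" "v2 \<in> V 2" "v3 \<in> V 3"
    "x = v0 + v1 + v2 + v3" using decomp by blast
  have x1: "x = smult 1 v0 + smult 1 v1 + smult 1 v2 + smult 1 v3" using v(5) by simp
  define K where "K = (eta - 0) * ((eta - 1) * ((eta - xi) * 1))"
  have K0: "K \<noteq> 0" unfolding K_def using eta0 eta1 xieta by auto
  have s1: "Lop xi x = smult ((0-xi)*1) v0 + smult ((1-xi)*1) v1 + smult ((xi-xi)*1) v2
      + smult ((eta-xi)*1) v3"
    unfolding x1 by (rule Lstep[OF v(1-4)])
  have s2: "Lop 1 (Lop xi x) = smult ((0-1)*((0-xi)*1)) v0 + smult ((1-1)*((1-xi)*1)) v1
      + smult ((xi-1)*((xi-xi)*1)) v2 + smult ((eta-1)*((eta-xi)*1)) v3"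
    unfolding s1 by (rule Lstep[OF v(1-4)])
  have s3: "Lop 0 (Lop 1 (Lop xi x)) = smult ((0-0)*((0-1)*((0-xi)*1))) v0
      + smult ((1-0)*((1-1)*((1-xi)*1))) v1
      + smult ((xi-0)*((xi-1)*((xi-xi)*1))) v2 + smult ((eta-0)*((eta-1)*((eta-xi)*1))) v3"
    unfolding s2 by (rule Lstep[OF v(1-4)])
  have "Lop 0 (Lop 1 (Lop xi x)) = smult K v3"
    unfolding s3 K_def by simp
  moreover have "Lop 0 (Lop 1 (Lop xi x)) \<in> S" using LS xS by blast
  ultimately have "smult K v3 \<in> S" by simp
  then have "smult (inverse K) (smult K v3) \<in> S" using subspace_scale[OF sS] by blast
  then have v3S: "v3 \<in> S" using K0 by simp
  have "miyamoto V x = x - v3 - v3" using miy_eq[OF v(1-4)] v(5) by (simp add: algebra_simps)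
  then show ?thesis using xS v3S subspace_diff[OF sS] by simp
qed

end

lemma aut_parts:
  assumes "is_automorphism smult mult f"
  shows "bij f" "f (x + y) = f x + f y" "f (smult c x) = smult c (f x)" "f (mult x y) = mult (f x) (f y)"
  using assms unfolding is_automorphism_def by auto

lemma aut_zero: "is_automorphism smult mult f \<Longrightarrow> f 0 = 0"
  using aut_parts(2)[of f 0 0] by simp

lemma aut_diff: "is_automorphism smult mult f \<Longrightarrow> f (x - y) = f x - f y"
  using aut_parts(2)[of f "x - y" y] by (simp add: algebra_simps)

lemma aut_comp: "is_automorphism smult mult f \<Longrightarrow> is_automorphism smult mult g \<Longrightarrow>
    is_automorphism smult mult (f \<circ> g)"
  unfolding is_automorphism_def by (auto intro: bij_comp)

lemma aut_id: "is_automorphism smult mult id"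
  unfolding is_automorphism_def by auto

lemma aut_pow: "is_automorphism smult mult f \<Longrightarrow> is_automorphism smult mult (f ^^ n)"
  by (induction n) (auto simp: aut_id aut_comp)

lemma subspace_img:
  assumes f: "is_automorphism smult mult f" and S: "subspace S"
  shows "subspace (f ` S)"
  unfolding subspace_def
proof (intro conjI ballI allI)
  show "0 \<in> f ` S" using aut_zero[OF f] subspace_0[OF S] by (metis image_eqI)
next
  fix x y assume "x \<in> f ` S" "y \<in> f ` S"
  then obtain u v where "u \<in> S" "v \<in> S" "x = f u" "y = f v" by blast
  then show "x + y \<in> f ` S" using aut_parts(2)[OF f, of u v] subspace_add[OF S] by (metis image_eqI)
next
  fix c x assume "x \<in> f ` S"
  then obtain u where "u \<in> S" "x = f u" by blast
  then show "smult c x \<in> f ` S" using aut_parts(3)[OF f, of c u] subspace_scale[OF S] by (metis image_eqI)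
qed

lemma setsum_img:
  assumes f: "is_automorphism smult mult f" and z: "z \<in> setsum A B"
  shows "f z \<in> setsum (f ` A) (f ` B)"
proof -
  obtain p q where "p \<in> A" "q \<in> B" "z = p + q" using z unfolding setsum_def by blast
  then show ?thesis unfolding setsum_def using aut_parts(2)[OF f, of p q] by blast
qed

lemma transport:
  assumes f: "is_automorphism smult mult f" and ax: "is_axis smult mult xi eta a V"
  shows "is_axis smult mult xi eta (f a) (\<lambda>n. f ` V n)"
proof -
  have inj: "inj f" and sj: "surj f" using aut_parts(1)[OF f] bij_is_inj bij_is_surj by auto
  note P = ax_parts[OF ax]
  have c1: "\<forall>i<4. subspace (f ` V i)" using subspace_img[OF f] sub_all[OF ax] by blast
  have c2: "\<forall>x. \<exists>v0 v1 v2 v3. v0 \<in> f ` V 0 \<and> v1 \<in> f ` V 1 \<and> v2 \<in> f ` V 2 \<and> v3 \<in> f ` V 3 \<and>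
            x = v0 + v1 + v2 + v3"
  proof
    fix x
    obtain y where y: "x = f y" using sj by (metis surjD)
    obtain v0 v1 v2 v3 where v: "v0 \<in> V 0" "v1 \<in> V 1" "v2 \<in> V 2" "v3 \<in> V 3"
      "y = v0 + v1 + v2 + v3" using decomp[OF ax] by blast
    have "x = f v0 + f v1 + f v2 + f v3" using y v(5) aut_parts(2)[OF f] by simp
    then show "\<exists>v0 v1 v2 v3. v0 \<in> f ` V 0 \<and> v1 \<in> f ` V 1 \<and> v2 \<in> f ` V 2 \<and> v3 \<in> f ` V 3 \<and>
            x = v0 + v1 + v2 + v3" using v by blast
  qed
  have c3: "\<forall>v0 v1 v2 v3. v0 \<in> f ` V 0 \<longrightarrow> v1 \<in> f ` V 1 \<longrightarrow> v2 \<in> f ` V 2 \<longrightarrow> v3 \<in> f ` V 3 \<longrightarrow>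
            v0 + v1 + v2 + v3 = 0 \<longrightarrow> v0 = 0 \<and> v1 = 0 \<and> v2 = 0 \<and> v3 = 0"
  proof (intro allI impI)
    fix v0 v1 v2 v3 assume "v0 \<in> f ` V 0" "v1 \<in> f ` V 1" "v2 \<in> f ` V 2" "v3 \<in> f ` V 3"
      and s0: "v0 + v1 + v2 + v3 = 0"
    then obtain u0 u1 u2 u3 where u: "u0 \<in> V 0" "u1 \<in> V 1" "u2 \<in> V 2" "u3 \<in> V 3"
      "v0 = f u0" "v1 = f u1" "v2 = f u2" "v3 = f u3" by blast
    have "f (u0 + u1 + u2 + u3) = f 0" using s0 u aut_parts(2)[OF f] aut_zero[OF f] by simp
    then have "u0 + u1 + u2 + u3 = 0" using inj by (simp add: inj_eq)
    then have "u0 = 0 \<and> u1 = 0 \<and> u2 = 0 \<and> u3 = 0" using direct[OF ax u(1-4)] by blast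
    then show "v0 = 0 \<and> v1 = 0 \<and> v2 = 0 \<and> v3 = 0" using u aut_zero[OF f] by simp
  qed
  have c4: "\<forall>i<4. \<forall>x \<in> f ` V i. mult x (f a) = smult (Phi xi eta i) x"
  proof (intro allI impI ballI)
    fix i x assume i: "i < (4::nat)" and "x \<in> f ` V i"
    then obtain u where u: "u \<in> V i" "x = f u" by blast
    show "mult x (f a) = smult (Phi xi eta i) x"
      using u eig[OF ax i u(1)] aut_parts(3,4)[OF f] by metis
  qed
  have c5: "f ` V 1 = range (\<lambda>c. smult c (f a))"
    unfolding V1[OF ax] using aut_parts(3)[OF f] by (auto simp: image_image)
  have c6: "\<forall>i<4. \<forall>x \<in> f ` V 0. \<forall>y \<in> f ` V i. mult x y \<in> f ` V i"
  proof (intro allI impI ballI)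
    fix i x y assume i: "i < (4::nat)" and "x \<in> f ` V 0" "y \<in> f ` V i"
    then obtain u v where "u \<in> V 0" "v \<in> V i" "x = f u" "y = f v" by blast
    then show "mult x y \<in> f ` V i" using fus0[OF ax i] aut_parts(4)[OF f] by (metis image_eqI)
  qed
  have c7: "\<forall>x \<in> f ` V 2. \<forall>y \<in> f ` V 2. mult x y \<in> setsum (f ` V 0) (f ` V 1)"
  proof (intro ballI)
    fix x y assume "x \<in> f ` V 2" "y \<in> f ` V 2"
    then obtain u v where "u \<in> V 2" "v \<in> V 2" "x = f u" "y = f v" by blast
    then show "mult x y \<in> setsum (f ` V 0) (f ` V 1)"
      using setsum_img[OF f fus22[OF ax]] aut_parts(4)[OF f] by metis
  qed
  have c8: "\<forall>x \<in> f ` V 2. \<forall>y \<in> f ` V 3. mult x y \<in> f ` V 3"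
  proof (intro ballI)
    fix x y assume "x \<in> f ` V 2" "y \<in> f ` V 3"
    then obtain u v where "u \<in> V 2" "v \<in> V 3" "x = f u" "y = f v" by blast
    then show "mult x y \<in> f ` V 3" using fus23[OF ax] aut_parts(4)[OF f] by (metis image_eqI)
  qed
  have c9: "\<forall>x \<in> f ` V 3. \<forall>y \<in> f ` V 3. mult x y \<in> setsum (setsum (f ` V 0) (f ` V 1)) (f ` V 2)"
  proof (intro ballI)
    fix x y assume "x \<in> f ` V 3" "y \<in> f ` V 3"
    then obtain u v where uv: "u \<in> V 3" "v \<in> V 3" "x = f u" "y = f v" by blast
    obtain p q where pq: "p \<in> setsum (V 0) (V 1)" "q \<in> V 2" "mult u v = p + q"
      using fus33[OF ax uv(1,2)] unfolding setsum_def by blast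
    have "mult x y = f (mult u v)" using uv aut_parts(4)[OF f] by simp
    also have "\<dots> = f p + f q" using pq(3) aut_parts(2)[OF f] by simp
    finally have "mult x y = f p + f q" .
    then show "mult x y \<in> setsum (setsum (f ` V 0) (f ` V 1)) (f ` V 2)"
      using setsum_img[OF f pq(1)] pq(2) unfolding setsum_def by blast
  qed
  show ?thesis unfolding is_axis_def using c1 c2 c3 c4 c5 c6 c7 c8 c9 by blast
qed

lemma miy_transport:
  assumes f: "is_automorphism smult mult f" and ax: "is_axis smult mult xi eta a V"
  shows "miyamoto (\<lambda>n. f ` V n) (f y) = f (miyamoto V y)"
proof -
  obtain v0 v1 v2 v3 where v: "v0 \<in> V 0" "v1 \<in> V 1" "v2 \<in> V 2" "v3 \<in> V 3"
    "y = v0 + v1 + v2 + v3" using decomp[OF ax] by blast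
  have "f y = f v0 + f v1 + f v2 + f v3" using v(5) aut_parts(2)[OF f] by simp
  moreover have "miyamoto (\<lambda>n. f ` V n) (f v0 + f v1 + f v2 + f v3) = f v0 + f v1 + f v2 - f v3"
    by (rule miy_eq[OF transport[OF f ax]]) (use v in auto)
  moreover have "f (miyamoto V y) = f v0 + f v1 + f v2 - f v3"
    using miy_eq[OF ax v(1-4)] v(5) aut_parts(2)[OF f] aut_diff[OF f] by simp
  ultimately show ?thesis by simp
qed


lemma fwd:
  assumes "is_dihedral smult mult xi eta"
  shows "\<exists>a Va b Vb. is_axis smult mult xi eta a Va \<and> is_axis smult mult xi eta b Vb \<and>
       generates smult mult {a, b} \<and>
       (\<exists>\<phi>. is_automorphism smult mult \<phi> \<and> \<phi> a = b \<and> \<phi> b = a)"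
proof -
  obtain A W \<theta> where ax: "\<forall>i. is_axis smult mult xi eta (A i) (W i)"
    and gen: "generates smult mult (range A)"
    and th: "is_automorphism smult mult \<theta>" "\<forall>i. \<theta> (A i) = A (i + 1)"
    and d3: "\<forall>j i::int. miyamoto (W j) (A i) = A (2 * j - i)"
    using assms unfolding is_dihedral_def by blast
  have g2: "generates smult mult {A 0, A 1}"
    unfolding generates_def
  proof (intro allI impI)
    fix S assume SS: "is_subalgebra smult mult S \<and> {A 0, A 1} \<subseteq> S"
    then have S: "is_subalgebra smult mult S" by blast
    have "A i \<in> S \<and> A (i + 1) \<in> S" for i
    proof (induction i rule: int_induct[where k=0])
      case base then show ?case using SS by simp
    next
      case (step1 i)
      have e: "2 * (i + 1) - i = i + 1 + 1" by simp
      have "miyamoto (W (i + 1)) (A i) = A (i + 1 + 1)" using d3 e by metis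
      moreover have "miyamoto (W (i + 1)) (A i) \<in> S"
        using miy_closed[OF spec[OF ax, of "i+1"] S] step1.IH by blast
      ultimately show ?case using step1.IH by simp
    next
      case (step2 i)
      have e: "2 * i - (i + 1) = i - 1" by simp
      have "miyamoto (W i) (A (i + 1)) = A (i - 1)" using d3 e by metis
      moreover have "miyamoto (W i) (A (i + 1)) \<in> S"
        using miy_closed[OF spec[OF ax, of i] S] step2.IH by blast
      ultimately show ?case using step2.IH by simp
    qed
    then have "range A \<subseteq> S" by blast
    then show "S = UNIV" using gen S unfolding generates_def by blast
  qed
  define \<psi> where "\<psi> = \<theta> \<circ> miyamoto (W 0)"
  have "is_automorphism smult mult \<psi>"
    unfolding \<psi>_def by (rule aut_comp[OF th(1) miy_aut[OF spec[OF ax, of 0]]])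
  moreover have "\<psi> (A 0) = A 1"
  proof -
    have "miyamoto (W 0) (A 0) = A 0" using d3[rule_format, of 0 0] by simp
    then show ?thesis unfolding \<psi>_def using th(2) by simp
  qed
  moreover have "\<psi> (A 1) = A 0"
  proof -
    have "miyamoto (W 0) (A 1) = A (-1)" using d3[rule_format, of 0 1] by simp
    moreover have "\<theta> (A (-1)) = A 0" using th(2)[rule_format, of "-1"] by simp
    ultimately show ?thesis unfolding \<psi>_def by simp
  qed
  ultimately show ?thesis using ax g2 by blast
qed

lemma bwd:
  assumes ax_a: "is_axis smult mult xi eta a Va" and ax_b: "is_axis smult mult xi eta b Vb"
    and gen: "generates smult mult {a, b}"
    and f: "is_automorphism smult mult \<phi>" "\<phi> a = b" "\<phi> b = a"
  shows "is_dihedral smult mult xi eta"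
proof -
  have ff: "\<phi> (\<phi> x) = x" for x
  proof -
    let ?S = "{x. \<phi> (\<phi> x) = x}"
    have "is_subalgebra smult mult ?S" unfolding is_subalgebra_def subspace_def
      using aut_parts(2-4)[OF f(1)] aut_zero[OF f(1)] by auto
    moreover have "{a, b} \<subseteq> ?S" using f by auto
    ultimately have "?S = UNIV" using gen unfolding generates_def by blast
    then show ?thesis by auto
  qed
  define \<tau> where "\<tau> = miyamoto Va"
  have \<tau>aut: "is_automorphism smult mult \<tau>" unfolding \<tau>_def by (rule miy_aut[OF ax_a])
  have \<tau>\<tau>: "\<tau> (\<tau> x) = x" for x unfolding \<tau>_def by (rule miy_inv[OF ax_a])
  have \<tau>a: "\<tau> a = a"
  proof -
    have "a \<in> Va 1" unfolding V1[OF ax_a] by (metis rangeI scale_one)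
    then have "\<tau> (0 + a + 0 + 0) = 0 + a + 0 - 0" unfolding \<tau>_def
      by (intro miy_eq[OF ax_a]) (auto simp: subspace_0 sub[OF ax_a])
    then show ?thesis by simp
  qed
  define \<theta> where "\<theta> = \<phi> \<circ> \<tau>"
  define \<theta>' where "\<theta>' = \<tau> \<circ> \<phi>"
  have \<theta>aut: "is_automorphism smult mult \<theta>" unfolding \<theta>_def by (rule aut_comp[OF f(1) \<tau>aut])
  have \<theta>'aut: "is_automorphism smult mult \<theta>'" unfolding \<theta>'_def by (rule aut_comp[OF \<tau>aut f(1)])
  have h1: "\<theta> (\<theta>' x) = x" for x unfolding \<theta>_def \<theta>'_def by (simp add: ff \<tau>\<tau>)
  have h2: "\<theta>' (\<theta> x) = x" for x unfolding \<theta>_def \<theta>'_def by (simp add: ff \<tau>\<tau>)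
  define P where "P = (\<lambda>i::int. if 0 \<le> i then \<theta> ^^ nat i else \<theta>' ^^ nat (- i))"
  have P0: "P 0 x = x" for x unfolding P_def by simp
  have Ps: "P (i + 1) x = \<theta> (P i x)" for i x
  proof (cases "0 \<le> i")
    case True
    then have "nat (i + 1) = Suc (nat i)" by simp
    then show ?thesis using True unfolding P_def by simp
  next
    case False
    then have "nat (- i) = Suc (nat (- (i + 1)))" by simp
    then show ?thesis using False unfolding P_def by (simp add: h1)
  qed
  have Pp: "P (i - 1) x = \<theta>' (P i x)" for i x
    using Ps[of "i - 1" x] h2 by simp
  have Padd: "P (i + j) x = P i (P j x)" for i j x
  proof (induction i rule: int_induct[where k=0])
    case base then show ?case by (simp add: P0)
  next
    case (step1 i)
    have "P (i + 1 + j) x = P ((i + j) + 1) x" by (simp add: ac_simps)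
    then show ?case using step1 Ps by simp
  next
    case (step2 i)
    have "P (i - 1 + j) x = P ((i + j) - 1) x" by (simp add: algebra_simps)
    then show ?case using step2 Pp by simp
  qed
  have Paut: "is_automorphism smult mult (P i)" for i
    unfolding P_def using aut_pow[OF \<theta>aut] aut_pow[OF \<theta>'aut] by simp
  have \<tau>\<theta>: "\<tau> (\<theta> z) = \<theta>' (\<tau> z)" for z unfolding \<theta>_def \<theta>'_def by simp
  have \<tau>\<theta>': "\<tau> (\<theta>' z) = \<theta> (\<tau> z)" for z unfolding \<theta>_def \<theta>'_def by (simp add: \<tau>\<tau>)
  have \<tau>P: "\<tau> (P k a) = P (- k) a" for k
  proof (induction k rule: int_induct[where k=0])
    case base then show ?case by (simp add: P0 \<tau>a)
  next
    case (step1 i)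
    have "P (- (i + 1)) a = P (- i - 1) a" by simp
    then show ?case using step1 Ps Pp \<tau>\<theta> by simp
  next
    case (step2 i)
    have "\<tau> (P (i - 1) a) = \<theta> (\<tau> (P i a))" using Pp \<tau>\<theta>' by simp
    also have "\<dots> = \<theta> (P (- i) a)" using step2.IH by simp
    also have "\<dots> = P (- i + 1) a" by (rule Ps[symmetric])
    also have "- i + 1 = - (i - 1)" by simp
    finally show ?case .
  qed
  have C1: "\<forall>i. is_axis smult mult xi eta (P i a) (\<lambda>n. P i ` Va n)"
    using transport[OF Paut ax_a] by blast
  have C2: "generates smult mult (range (\<lambda>i. P i a))"
    unfolding generates_def
  proof (intro allI impI)
    fix S assume SS: "is_subalgebra smult mult S \<and> range (\<lambda>i. P i a) \<subseteq> S"
    have "P 0 a = a" by (simp add: P0)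
    moreover have "P (0 + 1) a = b" using Ps[of 0 a] P0 f(2) \<tau>a unfolding \<theta>_def by simp
    ultimately have "a \<in> S" "b \<in> S" using SS by (metis rangeI subsetD)+
    then show "S = UNIV" using gen SS unfolding generates_def by blast
  qed
  have C3: "is_automorphism smult mult \<theta> \<and> (\<forall>i. \<theta> (P i a) = P (i + 1) a)"
    using \<theta>aut Ps by simp
  have C4: "miyamoto (\<lambda>n. P j ` Va n) (P i a) = P (2 * j - i) a" for j i
  proof -
    have "P i a = P j (P (i - j) a)" using Padd[of j "i - j" a] by simp
    then have "miyamoto (\<lambda>n. P j ` Va n) (P i a) = P j (\<tau> (P (i - j) a))"
      unfolding \<tau>_def using miy_transport[OF Paut ax_a] by simp
    also have "\<dots> = P j (P (j - i) a)" using \<tau>P[of "i - j"] by simp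
    also have "\<dots> = P (2 * j - i) a" using Padd[of j "j - i" a] by simp
    finally show ?thesis .
  qed
  show ?thesis unfolding is_dihedral_def
    by (rule exI[of _ "\<lambda>i. P i a"], rule exI[of _ "\<lambda>i n. P i ` Va n"]) (use C1 C2 C3 C4 in blast)
qed

end

theorem proposition2:
  fixes smult :: "'f::field \<Rightarrow> 'm::ab_group_add \<Rightarrow> 'm"
    and mult :: "'m \<Rightarrow> 'm \<Rightarrow> 'm"
    and xi eta :: 'f
  assumes "(2::'f) \<noteq> 0"
    and "xi \<noteq> 0" and "xi \<noteq> 1" and "eta \<noteq> 0" and "eta \<noteq> 1" and "xi \<noteq> eta"
    and "comm_nonassoc_algebra smult mult"
    and "is_axial_decomposition_algebra smult mult xi eta"
  shows "is_dihedral smult mult xi eta \<longleftrightarrow>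
    (\<exists>a Va b Vb. is_axis smult mult xi eta a Va \<and> is_axis smult mult xi eta b Vb \<and>
       generates smult mult {a, b} \<and>
       (\<exists>\<phi>. is_automorphism smult mult \<phi> \<and> \<phi> a = b \<and> \<phi> b = a))"
proof -
  interpret axalg smult mult xi eta
    using assms by unfold_locales auto
  show ?thesis using fwd bwd by blast
qed

end
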